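(* Let $A,B \in \mathcal{C}_1^{m \times n}$, $C \in \mathcal{C}_1^{n \times p}$ and $\lambda \in \mathcal{C}$ be given. Then (a) $A=B \iff \Phi_1(A) = \Phi_1(B)$. (b) $\Phi_1(A + B) = \Phi_1(A) + \Phi_1(B)$. (c) $\Phi_1(AC) = \Phi_1(A)\Phi_1(C)$, $\Phi_1(\lambda A) = \lambda \Phi_1(A)$, $\Phi_1(I_m) = I_{2m}$. (d) $\Phi_1(\overline{A}) = \begin{bmatrix} 0 & I_m \\ I_m & 0 \end{bmatrix} \Phi_1(A) \begin{bmatrix} 0 & I_n \\ I_n & 0 \end{bmatrix}$. (e) Let $A = A_0 + A_1 e$ and denote $A^{\#} = A_0^* - A_1^* e$, where $A_0^*$ and $A_1^*$ are the conjugate transposes of the complex matrices $A_0$ and $A_1$. Then $\Phi_1(A^{\#}) = \Phi_1(A)^*$, the conjugate transpose of the complex matrix $\Phi_1(A)$. (f) $A = \frac{1}{4}[(1 - ie)I_m,\ (i - e)I_m]\, \Phi_1(A)\, [(1 - ie)I_n,\ (e - i)I_n]^T$. (g) (for $m=n$) $A$ is invertible $\iff \Phi_1(A)$ is invertible, in which case $\Phi_1(A^{-1}) = \Phi_1(A)^{-1}$. (h) (for $m=n$) $p_A(A) = 0$, where $p_A(x) = \det[x I_{2m} - \Phi_1(A)]$.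
   Context: $\mathcal{C}$ denotes the complex numbers and $\mathcal{C}_1 = \mathcal{C}\{e\}$ is the complex Clifford algebra on one generator $e$ with $e^2 = -1$; every element is $a_0 + a_1 e$ with $a_0,a_1\in\mathcal{C}$, and $e$ commutes with complex scalars. $\mathcal{C}_1^{m\times n}$ denotes $m\times n$ matrices over $\mathcal{C}_1$; every $A \in \mathcal{C}_1^{m \times n}$ is written uniquely as $A = A_0 + A_1 e$ with $A_0, A_1 \in \mathcal{C}^{m \times n}$, and its conjugate is $\overline{A} = A_0 - A_1 e$. The complex matrix representation of $A$ is defined by $\Phi_1(A) = \begin{bmatrix} A_0 + A_1 i & 0 \\ 0 & A_0 - A_1 i \end{bmatrix}$, where $i$ is the complex imaginary unit. $I_m$ denotes the $m\times m$ identity matrix. These properties come from the universal factorization equality $J_{2m}\,\mathrm{diag}(A,\overline{A})\,J_{2n}^{-1} = \Phi_1(A)$ with $J_{2m} = \frac12\begin{bmatrix}(1-ie)I_m & -(i-e)I_m\\ -(i-e)I_m & (1-ie)I_m\end{bmatrix}$, $J_{2n}^{-1} = \frac12\begin{bmatrix}(1-ie)I_n & (i-e)I_n\\ (i-e)I_n & (1-ie)I_n\end{bmatrix}$. *)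

theory Defs
  imports "Jordan_Normal_Form.Matrix" "Jordan_Normal_Form.Char_Poly"
    "Jordan_Normal_Form.Schur_Decomposition"
begin

text \<open>An element a0 + a1 e is represented by the pair of its complex components.\<close>
datatype cl1 = Cl1 (cl_re0: complex) (cl_re1: complex)

lemma cl1_eq_iff: "x = y \<longleftrightarrow> cl_re0 x = cl_re0 y \<and> cl_re1 x = cl_re1 y"
  by (cases x; cases y) auto

instantiation cl1 :: comm_ring_1
begin
definition "0 = Cl1 0 0"
definition "1 = Cl1 1 0"
definition "x + y = Cl1 (cl_re0 x + cl_re0 y) (cl_re1 x + cl_re1 y)"
definition "x - y = Cl1 (cl_re0 x - cl_re0 y) (cl_re1 x - cl_re1 y)"
definition "- x = Cl1 (- cl_re0 x) (- cl_re1 x)"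
text \<open>(a0 + a1 e)(b0 + b1 e) = (a0 b0 - a1 b1) + (a0 b1 + a1 b0) e, since e^2 = -1.\<close>
definition "x * y = Cl1 (cl_re0 x * cl_re0 y - cl_re1 x * cl_re1 y)
                        (cl_re0 x * cl_re1 y + cl_re1 x * cl_re0 y)"
instance
  by standard (auto simp: cl1_eq_iff zero_cl1_def one_cl1_def plus_cl1_def minus_cl1_def
      uminus_cl1_def times_cl1_def algebra_simps)
end

definition cl_e :: cl1 where "cl_e = Cl1 0 1"
definition cl_of :: "complex \<Rightarrow> cl1" where "cl_of a = Cl1 a 0"

definition cmat0 :: "cl1 mat \<Rightarrow> complex mat" where "cmat0 A = map_mat cl_re0 A"
definition cmat1 :: "cl1 mat \<Rightarrow> complex mat" where "cmat1 A = map_mat cl_re1 A"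
definition cl_mat :: "complex mat \<Rightarrow> complex mat \<Rightarrow> cl1 mat" where
  "cl_mat A0 A1 = map_mat cl_of A0 + cl_e \<cdot>\<^sub>m map_mat cl_of A1"

definition cl_conj_mat :: "cl1 mat \<Rightarrow> cl1 mat" where
  "cl_conj_mat A = cl_mat (cmat0 A) (- cmat1 A)"

definition cl_sharp :: "cl1 mat \<Rightarrow> cl1 mat" where
  "cl_sharp A = cl_mat (mat_adjoint (cmat0 A)) (- mat_adjoint (cmat1 A))"

definition Phi1 :: "cl1 mat \<Rightarrow> complex mat" where
  "Phi1 A = four_block_mat (cmat0 A + \<i> \<cdot>\<^sub>m cmat1 A) (0\<^sub>m (dim_row A) (dim_col A))
                           (0\<^sub>m (dim_row A) (dim_col A)) (cmat0 A - \<i> \<cdot>\<^sub>m cmat1 A)"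

definition block_row :: "'a::zero mat \<Rightarrow> 'a mat \<Rightarrow> 'a mat" where
  "block_row X Y = four_block_mat X Y (0\<^sub>m 0 (dim_col X)) (0\<^sub>m 0 (dim_col Y))"

definition poly_mat_eval :: "complex poly \<Rightarrow> cl1 mat \<Rightarrow> cl1 mat" where
  "poly_mat_eval p A = foldr (\<lambda>k M. cl_of (coeff p k) \<cdot>\<^sub>m (A ^\<^sub>m k) + M)
       [0..<Suc (degree p)] (0\<^sub>m (dim_row A) (dim_row A))"

end

theory Submission
  imports Defs
begin

definition h1 :: "cl1 \<Rightarrow> complex" where "h1 x = cl_re0 x + \<i> * cl_re1 x"
definition h2 :: "cl1 \<Rightarrow> complex" where "h2 x = cl_re0 x - \<i> * cl_re1 x"

interpretation H1: comm_ring_hom h1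
  by unfold_locales (auto simp: h1_def plus_cl1_def times_cl1_def one_cl1_def zero_cl1_def algebra_simps)
interpretation H2: comm_ring_hom h2
  by unfold_locales (auto simp: h2_def plus_cl1_def times_cl1_def one_cl1_def zero_cl1_def algebra_simps)

definition psi :: "complex \<Rightarrow> complex \<Rightarrow> cl1" where
  "psi p q = Cl1 ((p + q) / 2) ((p - q) / (2 * \<i>))"

lemma h1_psi[simp]: "h1 (psi p q) = p" and h2_psi[simp]: "h2 (psi p q) = q"
  by (auto simp: h1_def h2_def psi_def field_simps)

lemma psi_h: "psi (h1 x) (h2 x) = x"
  by (cases x) (auto simp: h1_def h2_def psi_def field_simps)

lemma hh_inj: "h1 x = h1 y \<Longrightarrow> h2 x = h2 y \<Longrightarrow> x = y"
  by (metis psi_h)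

lemma h1_of[simp]: "h1 (cl_of c) = c" and h2_of[simp]: "h2 (cl_of c) = c"
  by (auto simp: h1_def h2_def cl_of_def)

lemma Phi1_alt: "Phi1 A = four_block_mat (map_mat h1 A) (0\<^sub>m (dim_row A) (dim_col A))
   (0\<^sub>m (dim_row A) (dim_col A)) (map_mat h2 A)"
  unfolding Phi1_def
  by (rule cong_four_block_mat, auto intro!: eq_matI simp: cmat0_def cmat1_def h1_def h2_def)

lemma Phi1_carrier[simp]: "A \<in> carrier_mat m n \<Longrightarrow> Phi1 A \<in> carrier_mat (2*m) (2*n)"
  unfolding Phi1_alt by (auto simp: mult_2)

lemma Phi1_dims[simp]: "dim_row (Phi1 A) = 2 * dim_row A" "dim_col (Phi1 A) = 2 * dim_col A"
  unfolding Phi1_alt by (auto simp: mult_2)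

lemma Phi1_altc: "A \<in> carrier_mat m n \<Longrightarrow> Phi1 A = four_block_mat (map_mat h1 A) (0\<^sub>m m n)
   (0\<^sub>m m n) (map_mat h2 A)"
  unfolding Phi1_alt by auto

lemma Phi1_idx1: "i < dim_row A \<Longrightarrow> j < dim_col A \<Longrightarrow> Phi1 A $$ (i,j) = h1 (A $$ (i,j))"
  unfolding Phi1_alt by simp
lemma Phi1_idx2: "i < dim_row A \<Longrightarrow> j < dim_col A \<Longrightarrow>
   Phi1 A $$ (dim_row A + i, dim_col A + j) = h2 (A $$ (i,j))"
  unfolding Phi1_alt by simp

lemma part_a: assumes "A \<in> carrier_mat m n" "B \<in> carrier_mat m n"
  shows "A = B \<longleftrightarrow> Phi1 A = Phi1 B"
proof
  assume e: "Phi1 A = Phi1 B"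
  show "A = B"
  proof (rule eq_matI)
    fix i j assume "i < dim_row B" "j < dim_col B"
    then show "A $$ (i,j) = B $$ (i,j)"
      using Phi1_idx1[of i A j] Phi1_idx1[of i B j] Phi1_idx2[of i A j] Phi1_idx2[of i B j] e assms
      by (intro hh_inj) auto
  qed (use assms in auto)
qed auto

lemma part_b: assumes "A \<in> carrier_mat m n" "B \<in> carrier_mat m n"
  shows "Phi1 (A + B) = Phi1 A + Phi1 B"
  unfolding Phi1_alt using assms
  by (intro eq_matI) (auto simp: H1.hom_add H2.hom_add)

lemma part_c1: assumes "A \<in> carrier_mat m n" "C \<in> carrier_mat n p"
  shows "Phi1 (A * C) = Phi1 A * Phi1 C"
proof -
  have "Phi1 A * Phi1 C = four_block_mat (map_mat h1 A * map_mat h1 C + 0\<^sub>m m n * 0\<^sub>m n p)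
     (map_mat h1 A * 0\<^sub>m n p + 0\<^sub>m m n * map_mat h2 C) (0\<^sub>m m n * map_mat h1 C + map_mat h2 A * 0\<^sub>m n p)
     (0\<^sub>m m n * 0\<^sub>m n p + map_mat h2 A * map_mat h2 C)"
    unfolding Phi1_altc[OF assms(1)] Phi1_altc[OF assms(2)] using assms by (intro mult_four_block_mat) auto
  also have "\<dots> = Phi1 (A * C)"
    unfolding Phi1_alt using assms
    by (intro cong_four_block_mat) (auto simp: H1.mat_hom_mult H2.mat_hom_mult)
  finally show ?thesis by simp
qed

lemma part_c2: "Phi1 (cl_of c \<cdot>\<^sub>m A) = c \<cdot>\<^sub>m Phi1 A"
  unfolding Phi1_alt by (intro eq_matI) (auto simp: H1.hom_mult H2.hom_mult)

lemma part_c3: "Phi1 (1\<^sub>m m) = 1\<^sub>m (2 * m)"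
  unfolding Phi1_alt by (intro eq_matI) (auto simp: mult_2)

lemma h1_conj: "h1 (Cl1 a (-b)) = h2 (Cl1 a b)" and h2_conj: "h2 (Cl1 a (-b)) = h1 (Cl1 a b)"
  by (auto simp: h1_def h2_def)

lemma cl_conj_idx: "i < dim_row A \<Longrightarrow> j < dim_col A \<Longrightarrow>
  cl_conj_mat A $$ (i,j) = Cl1 (cl_re0 (A $$ (i,j))) (- cl_re1 (A $$ (i,j)))"
  by (auto simp: cl_conj_mat_def cl_mat_def cmat0_def cmat1_def cl_of_def cl_e_def plus_cl1_def times_cl1_def)

lemma cl_conj_dims[simp]: "dim_row (cl_conj_mat A) = dim_row A" "dim_col (cl_conj_mat A) = dim_col A"
  by (auto simp: cl_conj_mat_def cl_mat_def cmat0_def cmat1_def)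

lemma part_d: assumes "A \<in> carrier_mat m n"
  shows "Phi1 (cl_conj_mat A) =
       four_block_mat (0\<^sub>m m m) (1\<^sub>m m) (1\<^sub>m m) (0\<^sub>m m m) * Phi1 A *
       four_block_mat (0\<^sub>m n n) (1\<^sub>m n) (1\<^sub>m n) (0\<^sub>m n n)"
proof -
  have 1: "four_block_mat (0\<^sub>m m m) (1\<^sub>m m) (1\<^sub>m m) (0\<^sub>m m m) * Phi1 A =
     four_block_mat (0\<^sub>m m m * map_mat h1 A + 1\<^sub>m m * 0\<^sub>m m n) (0\<^sub>m m m * 0\<^sub>m m n + 1\<^sub>m m * map_mat h2 A)
      (1\<^sub>m m * map_mat h1 A + 0\<^sub>m m m * 0\<^sub>m m n) (1\<^sub>m m * 0\<^sub>m m n + 0\<^sub>m m m * map_mat h2 A)"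
    unfolding Phi1_altc[OF assms(1)] using assms by (intro mult_four_block_mat) auto
  also have "\<dots> = four_block_mat (0\<^sub>m m n) (map_mat h2 A) (map_mat h1 A) (0\<^sub>m m n)"
    using assms by (intro cong_four_block_mat) auto
  finally have 1: "four_block_mat (0\<^sub>m m m) (1\<^sub>m m) (1\<^sub>m m) (0\<^sub>m m m) * Phi1 A
     = four_block_mat (0\<^sub>m m n) (map_mat h2 A) (map_mat h1 A) (0\<^sub>m m n)" .
  have "four_block_mat (0\<^sub>m m n) (map_mat h2 A) (map_mat h1 A) (0\<^sub>m m n) * 
     four_block_mat (0\<^sub>m n n) (1\<^sub>m n) (1\<^sub>m n) (0\<^sub>m n n) =
     four_block_mat (0\<^sub>m m n * 0\<^sub>m n n + map_mat h2 A * 1\<^sub>m n) (0\<^sub>m m n * 1\<^sub>m n + map_mat h2 A * 0\<^sub>m n n)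
      (map_mat h1 A * 0\<^sub>m n n + 0\<^sub>m m n * 1\<^sub>m n) (map_mat h1 A * 1\<^sub>m n + 0\<^sub>m m n * 0\<^sub>m n n)"
    using assms by (intro mult_four_block_mat) auto
  also have "\<dots> = four_block_mat (map_mat h2 A) (0\<^sub>m m n) (0\<^sub>m m n) (map_mat h1 A)"
    using assms by (intro cong_four_block_mat) auto
  also have "\<dots> = Phi1 (cl_conj_mat A)"
    unfolding Phi1_alt using assms
    by (intro eq_matI) (auto simp: cl_conj_idx h1_conj h2_conj)
  finally show ?thesis using 1 by simp
qed

lemma adj_alt: "mat_adjoint M = mat (dim_col M) (dim_row M) (\<lambda>(i,j). conjugate (M $$ (j,i)))"
  unfolding mat_adjoint_def by (intro eq_matI) (auto simp: mat_of_rows_def)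

lemma part_e: "Phi1 (cl_sharp A) = mat_adjoint (Phi1 A)"
  unfolding adj_alt Phi1_alt
  by (intro eq_matI) (auto simp: cl_sharp_def cl_mat_def cmat0_def cmat1_def adj_alt cl_of_def cl_e_def
    plus_cl1_def times_cl1_def h1_def h2_def)

lemma scal_id: "cl_of (1/4) * (Cl1 1 (-\<i>) * cl_of (h1 a) * Cl1 1 (-\<i>) + Cl1 \<i> (-1) * cl_of (h2 a) * Cl1 (-\<i>) 1) = a"
  by (cases a) (auto simp: cl_of_def h1_def h2_def times_cl1_def plus_cl1_def algebra_simps)

lemma part_f: assumes A: "A \<in> carrier_mat m n"
  shows "A = cl_of (1/4) \<cdot>\<^sub>m
         (block_row (Cl1 1 (-\<i>) \<cdot>\<^sub>m 1\<^sub>m m) (Cl1 \<i> (-1) \<cdot>\<^sub>m 1\<^sub>m m)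
          * map_mat cl_of (Phi1 A)
          * transpose_mat (block_row (Cl1 1 (-\<i>) \<cdot>\<^sub>m 1\<^sub>m n) (Cl1 (-\<i>) 1 \<cdot>\<^sub>m 1\<^sub>m n)))"
proof -
  define a where "a = Cl1 1 (-\<i>)"
  define b where "b = Cl1 \<i> (-1)"
  define b' where "b' = Cl1 (-\<i>) 1"
  define U where "U = map_mat (cl_of \<circ> h1) A"
  define V where "V = map_mat (cl_of \<circ> h2) A"
  have U: "U \<in> carrier_mat m n" and V: "V \<in> carrier_mat m n" using A by (auto simp: U_def V_def)
  have M: "map_mat cl_of (Phi1 A) = four_block_mat U (0\<^sub>m m n) (0\<^sub>m m n) V"
    unfolding Phi1_altc[OF A] U_def V_def using A by (intro eq_matI) (auto simp: cl_of_def zero_cl1_def)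
  have BR: "block_row (a \<cdot>\<^sub>m 1\<^sub>m m) (b \<cdot>\<^sub>m 1\<^sub>m m) = four_block_mat (a \<cdot>\<^sub>m 1\<^sub>m m) (b \<cdot>\<^sub>m 1\<^sub>m m) (0\<^sub>m 0 m) (0\<^sub>m 0 m)"
    unfolding block_row_def by simp
  have 1: "block_row (a \<cdot>\<^sub>m 1\<^sub>m m) (b \<cdot>\<^sub>m 1\<^sub>m m) * map_mat cl_of (Phi1 A) =
    four_block_mat ((a \<cdot>\<^sub>m 1\<^sub>m m) * U + (b \<cdot>\<^sub>m 1\<^sub>m m) * 0\<^sub>m m n) ((a \<cdot>\<^sub>m 1\<^sub>m m) * 0\<^sub>m m n + (b \<cdot>\<^sub>m 1\<^sub>m m) * V)
     (0\<^sub>m 0 m * U + 0\<^sub>m 0 m * 0\<^sub>m m n) (0\<^sub>m 0 m * 0\<^sub>m m n + 0\<^sub>m 0 m * V)"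
    unfolding BR M using U V by (intro mult_four_block_mat) auto
  also have "\<dots> = four_block_mat (a \<cdot>\<^sub>m U) (b \<cdot>\<^sub>m V) (0\<^sub>m 0 n) (0\<^sub>m 0 n)"
    using U V by (intro cong_four_block_mat) auto
  finally have 1: "block_row (a \<cdot>\<^sub>m 1\<^sub>m m) (b \<cdot>\<^sub>m 1\<^sub>m m) * map_mat cl_of (Phi1 A) =
     four_block_mat (a \<cdot>\<^sub>m U) (b \<cdot>\<^sub>m V) (0\<^sub>m 0 n) (0\<^sub>m 0 n)" .
  have T: "transpose_mat (block_row (a \<cdot>\<^sub>m 1\<^sub>m n) (b' \<cdot>\<^sub>m 1\<^sub>m n)) =
    four_block_mat (a \<cdot>\<^sub>m 1\<^sub>m n) (0\<^sub>m n 0) (b' \<cdot>\<^sub>m 1\<^sub>m n) (0\<^sub>m n 0)"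
    unfolding block_row_def by (intro eq_matI) auto
  have 2: "four_block_mat (a \<cdot>\<^sub>m U) (b \<cdot>\<^sub>m V) (0\<^sub>m 0 n) (0\<^sub>m 0 n) *
      four_block_mat (a \<cdot>\<^sub>m 1\<^sub>m n) (0\<^sub>m n 0) (b' \<cdot>\<^sub>m 1\<^sub>m n) (0\<^sub>m n 0) =
      four_block_mat ((a \<cdot>\<^sub>m U) * (a \<cdot>\<^sub>m 1\<^sub>m n) + (b \<cdot>\<^sub>m V) * (b' \<cdot>\<^sub>m 1\<^sub>m n))
        ((a \<cdot>\<^sub>m U) * 0\<^sub>m n 0 + (b \<cdot>\<^sub>m V) * 0\<^sub>m n 0)
        (0\<^sub>m 0 n * (a \<cdot>\<^sub>m 1\<^sub>m n) + 0\<^sub>m 0 n * (b' \<cdot>\<^sub>m 1\<^sub>m n))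
        (0\<^sub>m 0 n * 0\<^sub>m n 0 + 0\<^sub>m 0 n * 0\<^sub>m n 0)"
    using U V by (intro mult_four_block_mat) auto
  show ?thesis
    unfolding a_def[symmetric] b_def[symmetric] b'_def[symmetric] 1 T 2
  proof (rule eq_matI, goal_cases)
    case (1 i j)
    hence i: "i < m" and j: "j < n" using U V by auto
    have e1: "(a \<cdot>\<^sub>m U) * (a \<cdot>\<^sub>m 1\<^sub>m n) = a * a \<cdot>\<^sub>m U"
    proof -
      have "(a \<cdot>\<^sub>m U) * (a \<cdot>\<^sub>m 1\<^sub>m n) = a \<cdot>\<^sub>m ((a \<cdot>\<^sub>m U) * 1\<^sub>m n)"
        using U by (intro mult_smult_distrib) auto
      also have "\<dots> = a \<cdot>\<^sub>m (a \<cdot>\<^sub>m U)" using U by simp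
      also have "\<dots> = a * a \<cdot>\<^sub>m U" by (intro eq_matI) auto
      finally show ?thesis .
    qed
    have e2: "(b \<cdot>\<^sub>m V) * (b' \<cdot>\<^sub>m 1\<^sub>m n) = b * b' \<cdot>\<^sub>m V"
    proof -
      have "(b \<cdot>\<^sub>m V) * (b' \<cdot>\<^sub>m 1\<^sub>m n) = b' \<cdot>\<^sub>m ((b \<cdot>\<^sub>m V) * 1\<^sub>m n)"
        using V by (intro mult_smult_distrib) auto
      also have "\<dots> = b' \<cdot>\<^sub>m (b \<cdot>\<^sub>m V)" using V by simp
      also have "\<dots> = b * b' \<cdot>\<^sub>m V" by (intro eq_matI) auto
      finally show ?thesis .
    qed
    show ?case
      unfolding e1 e2 using i j U V A
      using scal_id[of "A $$ (i,j)"]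
      by (simp add: a_def b_def b'_def U_def V_def algebra_simps)
  qed (use U V A in auto)
qed

lemma mat_hh_inj: assumes "M \<in> carrier_mat a b" "N \<in> carrier_mat a b"
  "map_mat h1 M = map_mat h1 N" "map_mat h2 M = map_mat h2 N"
shows "M = N"
proof (rule eq_matI)
  fix i j assume ij: "i < dim_row N" "j < dim_col N"
  have "h1 (M $$ (i,j)) = map_mat h1 M $$ (i,j)" "h2 (M $$ (i,j)) = map_mat h2 M $$ (i,j)"
    "h1 (N $$ (i,j)) = map_mat h1 N $$ (i,j)" "h2 (N $$ (i,j)) = map_mat h2 N $$ (i,j)"
    using assms(1,2) ij by auto
  then show "M $$ (i,j) = N $$ (i,j)" using assms(3,4) by (intro hh_inj) auto
qed (use assms in auto)

lemma four_block_eq: assumes "A \<in> carrier_mat r1 c1" "B \<in> carrier_mat r1 c2" "C \<in> carrier_mat r2 c1" "D \<in> carrier_mat r2 c2"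
  "A' \<in> carrier_mat r1 c1" "B' \<in> carrier_mat r1 c2" "C' \<in> carrier_mat r2 c1" "D' \<in> carrier_mat r2 c2"
  and e: "four_block_mat A B C D = four_block_mat A' B' C' D'"
shows "A = A'" "D = D'"
proof -
  show "A = A'"
  proof (rule eq_matI)
    fix i j assume ij: "i < dim_row A'" "j < dim_col A'"
    have "four_block_mat A B C D $$ (i,j) = A $$ (i,j)" "four_block_mat A' B' C' D' $$ (i,j) = A' $$ (i,j)"
      using ij assms(1-8) by auto
    then show "A $$ (i,j) = A' $$ (i,j)" using e by metis
  qed (use assms in auto)
  show "D = D'"
  proof (rule eq_matI)
    fix i j assume ij: "i < dim_row D'" "j < dim_col D'"
    have "four_block_mat A B C D $$ (r1 + i, c1 + j) = D $$ (i,j)" "four_block_mat A' B' C' D' $$ (r1 + i, c1 + j) = D' $$ (i,j)"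
      using ij assms(1-8) by auto
    then show "D $$ (i,j) = D' $$ (i,j)" using e by metis
  qed (use assms in auto)
qed

lemma one_four_block: "1\<^sub>m (2*n) = four_block_mat (1\<^sub>m n) (0\<^sub>m n n) (0\<^sub>m n n) (1\<^sub>m n)"
  by (intro eq_matI) (auto simp: mult_2)

lemma inverts_dims: assumes "A \<in> carrier_mat n n" "inverts_mat A X" "inverts_mat X A"
  shows "X \<in> carrier_mat n n"
proof -
  have "A * X = 1\<^sub>m n" "X * A = 1\<^sub>m (dim_row X)" using assms unfolding inverts_mat_def by auto
  then have "dim_col X = n" "dim_row X = n"
    using assms(1) by (metis index_mult_mat(3) index_one_mat(3), metis assms(1) carrier_matD(2) index_mult_mat(3) index_one_mat(3))
  then show ?thesis by auto
qed

lemma part_g2: assumes A: "A \<in> carrier_mat n n" and "inverts_mat A X" "inverts_mat X A"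
  shows "inverts_mat (Phi1 A) (Phi1 X) \<and> inverts_mat (Phi1 X) (Phi1 A)"
proof -
  have X: "X \<in> carrier_mat n n" using inverts_dims assms by blast
  have "A * X = 1\<^sub>m n" "X * A = 1\<^sub>m n" using assms X unfolding inverts_mat_def by auto
  then show ?thesis using A X unfolding inverts_mat_def
    by (simp add: part_c1[symmetric] part_c3)
qed

lemma part_g1: assumes A: "A \<in> carrier_mat n n"
  shows "invertible_mat A \<longleftrightarrow> invertible_mat (Phi1 A)"
proof
  assume "invertible_mat A"
  then obtain X where "inverts_mat A X" "inverts_mat X A" unfolding invertible_mat_def by auto
  then show "invertible_mat (Phi1 A)" using part_g2[OF A] A unfolding invertible_mat_def square_mat.simps
    by auto
next
  assume "invertible_mat (Phi1 A)"
  then obtain Y where Y1: "inverts_mat (Phi1 A) Y" and Y2: "inverts_mat Y (Phi1 A)"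
    unfolding invertible_mat_def by auto
  have PA: "Phi1 A \<in> carrier_mat (2*n) (2*n)" using A by simp
  have Y: "Y \<in> carrier_mat (2*n) (2*n)" using inverts_dims[OF PA Y1 Y2] .
  obtain Y1 Y2 Y3 Y4 where sb: "split_block Y n n = (Y1,Y2,Y3,Y4)" by (cases "split_block Y n n") auto
  note S = split_block[OF sb, of n n]
  have Yc: "Y1 \<in> carrier_mat n n" "Y2 \<in> carrier_mat n n" "Y3 \<in> carrier_mat n n" "Y4 \<in> carrier_mat n n"
    and Ye: "Y = four_block_mat Y1 Y2 Y3 Y4" using S Y by (auto simp: mult_2)
  define P where "P = map_mat h1 A"
  define Q where "Q = map_mat h2 A"
  have P: "P \<in> carrier_mat n n" and Q: "Q \<in> carrier_mat n n" using A by (auto simp: P_def Q_def)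
  have PhiA: "Phi1 A = four_block_mat P (0\<^sub>m n n) (0\<^sub>m n n) Q" unfolding P_def Q_def Phi1_altc[OF A] ..
  have "Phi1 A * Y = four_block_mat (P * Y1 + 0\<^sub>m n n * Y3) (P * Y2 + 0\<^sub>m n n * Y4)
     (0\<^sub>m n n * Y1 + Q * Y3) (0\<^sub>m n n * Y2 + Q * Y4)"
    unfolding PhiA Ye using P Q Yc by (intro mult_four_block_mat) auto
  also have "\<dots> = four_block_mat (P * Y1) (P * Y2) (Q * Y3) (Q * Y4)"
    using P Q Yc by (intro cong_four_block_mat) auto
  finally have F1: "Phi1 A * Y = four_block_mat (P * Y1) (P * Y2) (Q * Y3) (Q * Y4)" .
  have "four_block_mat (P * Y1) (P * Y2) (Q * Y3) (Q * Y4) = four_block_mat (1\<^sub>m n) (0\<^sub>m n n) (0\<^sub>m n n) (1\<^sub>m n)"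
  proof -
    have "Phi1 A * Y = 1\<^sub>m (2*n)" using Y1 A Y unfolding inverts_mat_def by simp
    then show ?thesis using F1 one_four_block[of n] by metis
  qed
  from four_block_eq[where ?r1.0=n and ?c1.0=n and ?r2.0=n and ?c2.0=n, OF _ _ _ _ _ _ _ _ this] P Q Yc
  have PY: "P * Y1 = 1\<^sub>m n" and QY: "Q * Y4 = 1\<^sub>m n" by auto
  have "Y * Phi1 A = four_block_mat (Y1 * P + Y2 * 0\<^sub>m n n) (Y1 * 0\<^sub>m n n + Y2 * Q)
     (Y3 * P + Y4 * 0\<^sub>m n n) (Y3 * 0\<^sub>m n n + Y4 * Q)"
    unfolding PhiA Ye using P Q Yc by (intro mult_four_block_mat) auto
  also have "\<dots> = four_block_mat (Y1 * P) (Y2 * Q) (Y3 * P) (Y4 * Q)"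
    using P Q Yc by (intro cong_four_block_mat) auto
  finally have F2: "Y * Phi1 A = four_block_mat (Y1 * P) (Y2 * Q) (Y3 * P) (Y4 * Q)" .
  have "four_block_mat (Y1 * P) (Y2 * Q) (Y3 * P) (Y4 * Q) = four_block_mat (1\<^sub>m n) (0\<^sub>m n n) (0\<^sub>m n n) (1\<^sub>m n)"
  proof -
    have "Y * Phi1 A = 1\<^sub>m (2*n)" using Y2 A Y unfolding inverts_mat_def by simp
    then show ?thesis using F2 one_four_block[of n] by metis
  qed
  from four_block_eq[where ?r1.0=n and ?c1.0=n and ?r2.0=n and ?c2.0=n, OF _ _ _ _ _ _ _ _ this] P Q Yc
  have YP: "Y1 * P = 1\<^sub>m n" and YQ: "Y4 * Q = 1\<^sub>m n" by auto
  define X where "X = mat n n (\<lambda>(i,j). psi (Y1 $$ (i,j)) (Y4 $$ (i,j)))"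
  have X: "X \<in> carrier_mat n n" unfolding X_def by auto
  have hX1: "map_mat h1 X = Y1" and hX2: "map_mat h2 X = Y4"
    using Yc unfolding X_def by (auto intro!: eq_matI)
  have "A * X = 1\<^sub>m n"
    by (rule mat_hh_inj[of _ n n], use A X in auto,
        auto simp: H1.mat_hom_mult[OF A X] H2.mat_hom_mult[OF A X] hX1 hX2 PY[unfolded P_def] QY[unfolded Q_def])
  moreover have "X * A = 1\<^sub>m n"
    by (rule mat_hh_inj[of _ n n], use A X in auto,
        auto simp: H1.mat_hom_mult[OF X A] H2.mat_hom_mult[OF X A] hX1 hX2 YP[unfolded P_def] YQ[unfolded Q_def])
  ultimately show "invertible_mat A" unfolding invertible_mat_def inverts_mat_def using A X by auto
qed

lemma mult_idx: "A \<in> carrier_mat n k \<Longrightarrow> B \<in> carrier_mat k m \<Longrightarrow> i < n \<Longrightarrow> j < m \<Longrightarrow>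
  (A * B) $$ (i,j) = (\<Sum>l<k. A $$ (i,l) * B $$ (l,j))"
  by (auto simp: scalar_prod_def atLeast0LessThan intro!: sum.cong)

lemma pow_Suc_left: "(M :: 'a :: semiring_1 mat) \<in> carrier_mat n n \<Longrightarrow> M ^\<^sub>m Suc k = M * M ^\<^sub>m k"
proof (induction k)
  case (Suc k)
  have "M ^\<^sub>m Suc (Suc k) = (M * M ^\<^sub>m k) * M" using Suc by simp
  also have "\<dots> = M * (M ^\<^sub>m k * M)" using Suc.prems by (intro assoc_mult_mat) auto
  finally show ?case by simp
qed simp

definition Ev :: "complex poly \<Rightarrow> complex mat \<Rightarrow> complex mat" where
  "Ev p M = foldr (\<lambda>k N. coeff p k \<cdot>\<^sub>m (M ^\<^sub>m k) + N) [0..<Suc (degree p)] (0\<^sub>m (dim_row M) (dim_row M))"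

lemma foldr_idx: assumes M: "M \<in> carrier_mat n n"
  shows "foldr (\<lambda>k N. coeff p k \<cdot>\<^sub>m (M ^\<^sub>m k) + N) xs (0\<^sub>m n n) \<in> carrier_mat n n \<and>
    (\<forall>i<n. \<forall>j<n. foldr (\<lambda>k N. coeff p k \<cdot>\<^sub>m (M ^\<^sub>m k) + N) xs (0\<^sub>m n n) $$ (i,j) =
       (\<Sum>k \<leftarrow> xs. coeff p k * (M ^\<^sub>m k) $$ (i,j)))"
  by (induction xs) (use M in auto)

lemma Ev_carrier: "M \<in> carrier_mat n n \<Longrightarrow> Ev p M \<in> carrier_mat n n"
  unfolding Ev_def using foldr_idx[of M n p "[0..<Suc (degree p)]"] by (simp del: upt_Suc)

lemma Ev_idx: assumes M: "M \<in> carrier_mat n n" and ij: "i < n" "j < n" and N: "degree p < N"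
  shows "Ev p M $$ (i,j) = (\<Sum>k<N. coeff p k * (M ^\<^sub>m k) $$ (i,j))"
proof -
  have "Ev p M $$ (i,j) = (\<Sum>k \<leftarrow> [0..<Suc (degree p)]. coeff p k * (M ^\<^sub>m k) $$ (i,j))"
    unfolding Ev_def using foldr_idx[OF M, of p "[0..<Suc (degree p)]"] M ij by (simp del: upt_Suc)
  also have "\<dots> = (\<Sum>k\<in>set [0..<Suc (degree p)]. coeff p k * (M ^\<^sub>m k) $$ (i,j))"
    by (rule sum_set_upt_conv_sum_list_nat[symmetric])
  also have "\<dots> = (\<Sum>k<N. coeff p k * (M ^\<^sub>m k) $$ (i,j))"
    using N by (intro sum.mono_neutral_left) (auto simp: coeff_eq_0)
  finally show ?thesis .
qed

lemma coeff_lin: "coeff ([:-a,1:] * p) k = coeff (pCons 0 p) k - a * coeff p (k::nat)" for a :: complex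
  by (simp add: mult_pCons_left)
lemma Ev_lin: assumes M: "M \<in> carrier_mat n n"
  shows "Ev ([:-a,1:] * p) M = (M - a \<cdot>\<^sub>m 1\<^sub>m n) * Ev p M"
proof (rule eq_matI)
  have E: "Ev p M \<in> carrier_mat n n" using Ev_carrier[OF M] .
  fix i j assume "i < dim_row ((M - a \<cdot>\<^sub>m 1\<^sub>m n) * Ev p M)" "j < dim_col ((M - a \<cdot>\<^sub>m 1\<^sub>m n) * Ev p M)"
  then have i: "i < n" and j: "j < n" using M E by auto
  define N where "N = degree p + 1"
  have dq: "degree ([:-a,1:] * p) < Suc N"
    using degree_mult_le[of "[:-a,1:]" p] unfolding N_def by auto
  have "Ev ([:-a,1:] * p) M $$ (i,j) = (\<Sum>k<Suc N. coeff ([:-a,1:] * p) k * (M ^\<^sub>m k) $$ (i,j))"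
    using Ev_idx[OF M i j dq] .
  also have "\<dots> = (\<Sum>k<Suc N. coeff (pCons 0 p) k * (M ^\<^sub>m k) $$ (i,j))
     - a * (\<Sum>k<Suc N. coeff p k * (M ^\<^sub>m k) $$ (i,j))"
    unfolding coeff_lin by (simp add: algebra_simps sum_subtractf sum_distrib_left)
  also have "(\<Sum>k<Suc N. coeff (pCons 0 p) k * (M ^\<^sub>m k) $$ (i,j)) =
     (\<Sum>k<N. coeff p k * (M ^\<^sub>m Suc k) $$ (i,j))"
    unfolding sum.lessThan_Suc_shift by simp
  also have "\<dots> = (\<Sum>k<N. coeff p k * (\<Sum>l<n. M $$ (i,l) * (M ^\<^sub>m k) $$ (l,j)))"
    by (rule sum.cong[OF refl], subst pow_Suc_left[OF M], subst mult_idx[OF M pow_carrier_mat[OF M] i j], rule refl)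
  also have "\<dots> = (\<Sum>l<n. M $$ (i,l) * (\<Sum>k<N. coeff p k * (M ^\<^sub>m k) $$ (l,j)))"
    by (simp add: sum_distrib_left algebra_simps sum.swap[of _ "{..<N}"])
  also have "\<dots> = (\<Sum>l<n. M $$ (i,l) * Ev p M $$ (l,j))"
    using Ev_idx[OF M _ j, of _ p N] by (intro sum.cong refl) (auto simp: N_def)
  also have "\<dots> = (M * Ev p M) $$ (i,j)" using mult_idx[OF M E i j] by simp
  also have "(\<Sum>k<Suc N. coeff p k * (M ^\<^sub>m k) $$ (i,j)) = Ev p M $$ (i,j)"
    using Ev_idx[OF M i j, of p "Suc N"] by (simp add: N_def)
  finally have L: "Ev ([:-a,1:] * p) M $$ (i,j) = (M * Ev p M) $$ (i,j) - a * Ev p M $$ (i,j)" .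
  have "(M - a \<cdot>\<^sub>m 1\<^sub>m n) * Ev p M = M * Ev p M - (a \<cdot>\<^sub>m 1\<^sub>m n) * Ev p M"
    using M E by (intro minus_mult_distrib_mat) auto
  also have "(a \<cdot>\<^sub>m 1\<^sub>m n) * Ev p M = a \<cdot>\<^sub>m Ev p M" using E by (simp add: mult_smult_assoc_mat[of _ n n])
  finally show "Ev ([:-a,1:] * p) M $$ (i,j) = ((M - a \<cdot>\<^sub>m 1\<^sub>m n) * Ev p M) $$ (i,j)"
    using L M E i j by simp
next
  show "dim_row (Ev ([:- a, 1:] * p) M) = dim_row ((M - a \<cdot>\<^sub>m 1\<^sub>m n) * Ev p M)"
    "dim_col (Ev ([:- a, 1:] * p) M) = dim_col ((M - a \<cdot>\<^sub>m 1\<^sub>m n) * Ev p M)"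
    using Ev_carrier[OF M, of p] Ev_carrier[OF M, of "[:-a,1:] * p"] M by (auto simp del: pCons_0_hom.hom_minus)
qed

fun Rl :: "complex mat \<Rightarrow> complex list \<Rightarrow> complex mat" where
  "Rl M [] = 1\<^sub>m (dim_row M)"
| "Rl M (e # es) = (M - e \<cdot>\<^sub>m 1\<^sub>m (dim_row M)) * Rl M es"

lemma Rl_carrier: "M \<in> carrier_mat n n \<Longrightarrow> Rl M es \<in> carrier_mat n n"
  by (induction es) auto

lemma Ev_one: "M \<in> carrier_mat n n \<Longrightarrow> Ev 1 M = 1\<^sub>m n"
  unfolding Ev_def by (intro eq_matI) auto

lemma Ev_prod: assumes M: "M \<in> carrier_mat n n"
  shows "Ev (\<Prod>a \<leftarrow> es. [:-a,1:]) M = Rl M es"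
proof (induction es)
  case Nil then show ?case using M Ev_one by auto
next
  case (Cons e es)
  then show ?case using Ev_lin[OF M, of e "\<Prod>a \<leftarrow> es. [:-a,1:]"] M by simp
qed

lemma Rl_append: assumes M: "M \<in> carrier_mat n n"
  shows "Rl M (xs @ ys) = Rl M xs * Rl M ys"
proof (induction xs)
  case Nil then show ?case using M Rl_carrier[OF M, of ys] by simp
next
  case (Cons x xs)
  have "Rl M ((x # xs) @ ys) = (M - x \<cdot>\<^sub>m 1\<^sub>m n) * (Rl M xs * Rl M ys)" using Cons M by simp
  also have "\<dots> = (M - x \<cdot>\<^sub>m 1\<^sub>m n) * Rl M xs * Rl M ys"
    using M Rl_carrier[OF M, of xs] Rl_carrier[OF M, of ys] by (intro assoc_mult_mat[symmetric, of _ n n _ n _ n]) auto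
  finally show ?case using M by simp
qed

lemma assoc6: fixes A B C D E F :: "'a::comm_ring_1 mat"
  assumes "A \<in> carrier_mat n n" "B \<in> carrier_mat n n" "C \<in> carrier_mat n n" "D \<in> carrier_mat n n"
    "E \<in> carrier_mat n n" "F \<in> carrier_mat n n"
  shows "(A * B * C) * (D * E * F) = A * (B * (C * D) * E) * F"
  using assms by (simp add: assoc_mult_mat[of _ n n _ n _ n])

lemma conj_minus: fixes T S S' :: "complex mat"
  assumes c: "T \<in> carrier_mat n n" "S \<in> carrier_mat n n" "S' \<in> carrier_mat n n" and i1: "S * S' = 1\<^sub>m n"
  shows "S * T * S' - x \<cdot>\<^sub>m 1\<^sub>m n = S * (T - x \<cdot>\<^sub>m 1\<^sub>m n) * S'"
proof -
  have "S * (T - x \<cdot>\<^sub>m 1\<^sub>m n) = S * T - S * (x \<cdot>\<^sub>m 1\<^sub>m n)"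
    using c by (intro mult_minus_distrib_mat) auto
  also have "S * (x \<cdot>\<^sub>m 1\<^sub>m n) = x \<cdot>\<^sub>m S" 
    using mult_smult_distrib[OF c(2) one_carrier_mat[of n], of x] c(2) by simp
  finally have "S * (T - x \<cdot>\<^sub>m 1\<^sub>m n) * S' = (S * T - x \<cdot>\<^sub>m S) * S'" by simp
  also have "\<dots> = S * T * S' - (x \<cdot>\<^sub>m S) * S'"
    using c by (intro minus_mult_distrib_mat) auto
  also have "(x \<cdot>\<^sub>m S) * S' = x \<cdot>\<^sub>m 1\<^sub>m n" 
    using mult_smult_assoc_mat[OF c(2) c(3), of x] i1 by simp
  finally show ?thesis by simp
qed


lemma Rl_sim: assumes sim: "similar_mat_wit M T S S'"
  shows "Rl M es = S * Rl T es * S'"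
proof -
  define n where "n = dim_row M"
  have w: "{M,T,S,S'} \<subseteq> carrier_mat n n" and i1: "S * S' = 1\<^sub>m n" and i2: "S' * S = 1\<^sub>m n"
    and e: "M = S * T * S'"
    using sim[unfolded similar_mat_wit_def Let_def, folded n_def] by blast+
  have c: "M \<in> carrier_mat n n" "T \<in> carrier_mat n n" "S \<in> carrier_mat n n" "S' \<in> carrier_mat n n"
    using w by auto
  have dT: "dim_row T = n" using c by auto
  show ?thesis
  proof (induction es)
    case Nil
    have "S * 1\<^sub>m n = S" using c by simp
    then have "S * 1\<^sub>m n * S' = 1\<^sub>m n" using i1 by simp
    then show ?case using dT by (simp add: n_def)
  next
    case (Cons x es)
    let ?R = "Rl T es"
    let ?U = "T - x \<cdot>\<^sub>m 1\<^sub>m n"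
    have R: "?R \<in> carrier_mat n n" using Rl_carrier[OF c(2)] .
    have U: "?U \<in> carrier_mat n n" using c by auto
    have "Rl M (x # es) = (M - x \<cdot>\<^sub>m 1\<^sub>m n) * Rl M es" by (simp add: n_def)
    also have "\<dots> = (S * ?U * S') * (S * ?R * S')"
      using Cons conj_minus[OF c(2-4) i1, of x] e by simp
    also have "\<dots> = S * (?U * (S' * S) * ?R) * S'"
      by (rule assoc6[OF c(3) U c(4) c(3) R c(4)])
    also have "?U * (S' * S) = ?U" using U i2 by simp
    also have "S * (?U * ?R) * S' = S * Rl T (x # es) * S'" using dT by simp
    finally show ?case .
  qed
qed

lemma Rl_tri: assumes T: "T \<in> carrier_mat n n" and ut: "upper_triangular T"
  shows "Rl T (diag_mat T) = 0\<^sub>m n n"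
proof -
  define ds where "ds = diag_mat T"
  have len: "length ds = n" using T unfolding ds_def diag_mat_def by auto
  have dsk: "k < n \<Longrightarrow> ds ! k = T $$ (k,k)" for k using T unfolding ds_def diag_mat_def by auto
  have main: "\<forall>i j. k \<le> i \<longrightarrow> i < n \<longrightarrow> j < n \<longrightarrow> Rl T (drop k ds) $$ (i,j) = 0" if "k \<le> n" for k
    using that
  proof (induction k rule: inc_induct)
    case base then show ?case using len by simp
  next
    case (step k)
    have dk: "drop k ds = ds ! k # drop (Suc k) ds" using step len by (simp add: Cons_nth_drop_Suc)
    let ?R = "Rl T (drop (Suc k) ds)"
    have R: "?R \<in> carrier_mat n n" using Rl_carrier[OF T] .
    show ?case
    proof (intro allI impI)
      fix i j assume ij: "k \<le> i" "i < n" "j < n"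
      have "Rl T (drop k ds) $$ (i,j) = ((T - ds ! k \<cdot>\<^sub>m 1\<^sub>m n) * ?R) $$ (i,j)"
        unfolding dk using T by simp
      also have "\<dots> = (\<Sum>l<n. (T - ds ! k \<cdot>\<^sub>m 1\<^sub>m n) $$ (i,l) * ?R $$ (l,j))"
        using T R ij by (intro mult_idx) auto
      also have "\<dots> = 0"
      proof (intro sum.neutral ballI)
        fix l assume l: "l \<in> {..<n}"
        show "(T - ds ! k \<cdot>\<^sub>m 1\<^sub>m n) $$ (i,l) * ?R $$ (l,j) = 0"
        proof (cases "Suc k \<le> l")
          case True then show ?thesis using step.IH l ij by auto
        next
          case False
          then have "l \<le> i" using ij by auto
          have "(T - ds ! k \<cdot>\<^sub>m 1\<^sub>m n) $$ (i,l) = 0"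
          proof (cases "l = i")
            case True
            then have "i = k" using False ij by auto
            then show ?thesis using True T ij dsk[of k] by auto
          next
            case False
            then have "l < i" using \<open>l \<le> i\<close> by auto
            then show ?thesis using ut T ij l unfolding upper_triangular_def by auto
          qed
          then show ?thesis by simp
        qed
      qed
      finally show "Rl T (drop k ds) $$ (i,j) = 0" .
    qed
  qed
  have "Rl T ds = 0\<^sub>m n n"
    using main[of 0] Rl_carrier[OF T, of ds] by (intro eq_matI) auto
  then show ?thesis unfolding ds_def .
qed

lemma CH_split: fixes M :: "complex mat"
  assumes M: "M \<in> carrier_mat n n" and cM: "char_poly M = (\<Prod>a \<leftarrow> es. [:-a,1:])"
  shows "Rl M es = 0\<^sub>m n n"
proof -
  obtain B S S' where sd: "schur_decomposition M es = (B,S,S')" by (cases "schur_decomposition M es") auto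
  from schur_decomposition[OF M cM sd]
  have sim: "similar_mat_wit M B S S'" and ut: "upper_triangular B" and dB: "diag_mat B = es" by auto
  have c: "B \<in> carrier_mat n n" "S \<in> carrier_mat n n" "S' \<in> carrier_mat n n"
    using sim M unfolding similar_mat_wit_def Let_def by auto
  have "Rl M es = S * Rl B es * S'" using Rl_sim[OF sim] .
  also have "Rl B es = 0\<^sub>m n n" using Rl_tri[OF c(1) ut] dB by simp
  finally show ?thesis using c by simp
qed


lemma foldr_hom: assumes h: "comm_ring_hom h" and hc: "\<And>c. h (cl_of c) = c"
  and A: "A \<in> carrier_mat n n"
  shows "foldr (\<lambda>k M. cl_of (coeff p k) \<cdot>\<^sub>m (A ^\<^sub>m k) + M) xs (0\<^sub>m n n) \<in> carrier_mat n n \<and>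
    map_mat h (foldr (\<lambda>k M. cl_of (coeff p k) \<cdot>\<^sub>m (A ^\<^sub>m k) + M) xs (0\<^sub>m n n)) =
    foldr (\<lambda>k N. coeff p k \<cdot>\<^sub>m (map_mat h A ^\<^sub>m k) + N) xs (0\<^sub>m n n)"
proof (induction xs)
  case Nil
  interpret comm_ring_hom h by fact
  show ?case by (auto intro!: eq_matI)
next
  case (Cons k xs)
  interpret comm_ring_hom h by fact
  have pw: "map_mat h A ^\<^sub>m k = map_mat h (A ^\<^sub>m k)" using mat_hom_pow[OF A] by simp
  define F where "F = foldr (\<lambda>k M. cl_of (coeff p k) \<cdot>\<^sub>m (A ^\<^sub>m k) + M) xs (0\<^sub>m n n)"
  have FC: "F \<in> carrier_mat n n" and FE: "map_mat h F = foldr (\<lambda>k N. coeff p k \<cdot>\<^sub>m (map_mat h A ^\<^sub>m k) + N) xs (0\<^sub>m n n)"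
    using Cons.IH unfolding F_def by auto
  have "map_mat h (cl_of (coeff p k) \<cdot>\<^sub>m A ^\<^sub>m k + F) = coeff p k \<cdot>\<^sub>m map_mat h (A ^\<^sub>m k) + map_mat h F"
    using FC A by (intro eq_matI) (auto simp: hom_add hom_mult hc)
  then show ?case using FC FE A pw unfolding F_def by simp
qed

lemma poly_hom: assumes h: "comm_ring_hom h" and hc: "\<And>c. h (cl_of c) = c"
  and A: "A \<in> carrier_mat n n"
  shows "poly_mat_eval p A \<in> carrier_mat n n \<and> map_mat h (poly_mat_eval p A) = Ev p (map_mat h A)"
  using foldr_hom[OF h hc A, of p "[0..<Suc (degree p)]"] A unfolding poly_mat_eval_def Ev_def
  by (simp del: upt_Suc)

lemma part_h: assumes A: "A \<in> carrier_mat n n"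
  shows "poly_mat_eval (char_poly (Phi1 A)) A = 0\<^sub>m n n"
proof -
  define P where "P = map_mat h1 A"
  define Q where "Q = map_mat h2 A"
  have P: "P \<in> carrier_mat n n" and Q: "Q \<in> carrier_mat n n" using A by (auto simp: P_def Q_def)
  obtain esP where eP: "char_poly P = (\<Prod>a \<leftarrow> esP. [:-a,1:])" using char_poly_factorized[OF P] by auto
  obtain esQ where eQ: "char_poly Q = (\<Prod>a \<leftarrow> esQ. [:-a,1:])" using char_poly_factorized[OF Q] by auto
  have "char_poly (Phi1 A) = char_poly P * char_poly Q"
    by (rule char_poly_0_block[OF _ _ _ P _ Q], unfold P_def Q_def, rule Phi1_altc[OF A],
        use eP eQ in \<open>auto simp: P_def Q_def\<close>)
  also have "\<dots> = (\<Prod>a \<leftarrow> esP @ esQ. [:-a,1:])" unfolding eP eQ by simp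
  finally have ch: "char_poly (Phi1 A) = (\<Prod>a \<leftarrow> esP @ esQ. [:-a,1:])" .
  have ev1: "Ev (char_poly (Phi1 A)) P = 0\<^sub>m n n"
    unfolding ch Ev_prod[OF P] Rl_append[OF P] CH_split[OF P eP] using Rl_carrier[OF P, of esQ] by simp
  have ev2: "Ev (char_poly (Phi1 A)) Q = 0\<^sub>m n n"
    unfolding ch Ev_prod[OF Q] Rl_append[OF Q] CH_split[OF Q eQ] using Rl_carrier[OF Q, of esP] by simp
  have h1c: "comm_ring_hom h1" "\<And>c. h1 (cl_of c) = c" by (unfold_locales, simp)
  have h2c: "comm_ring_hom h2" "\<And>c. h2 (cl_of c) = c" by (unfold_locales, simp)
  note r1 = poly_hom[OF h1c A, of "char_poly (Phi1 A)"]
  note r2 = poly_hom[OF h2c A, of "char_poly (Phi1 A)"]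
  show ?thesis
    by (rule mat_hh_inj[of _ n n]) (use r1 r2 ev1 ev2 in \<open>auto simp: P_def Q_def intro!: eq_matI\<close>)
qed

theorem corollary7:
  fixes A B :: "cl1 mat" and C :: "cl1 mat" and c :: complex and m n p :: nat
  assumes "A \<in> carrier_mat m n" and "B \<in> carrier_mat m n" and "C \<in> carrier_mat n p"
  shows
    "(A = B \<longleftrightarrow> Phi1 A = Phi1 B)
   \<and> Phi1 (A + B) = Phi1 A + Phi1 B
   \<and> Phi1 (A * C) = Phi1 A * Phi1 C
   \<and> Phi1 (cl_of c \<cdot>\<^sub>m A) = c \<cdot>\<^sub>m Phi1 A
   \<and> Phi1 (1\<^sub>m m) = 1\<^sub>m (2 * m)
   \<and> Phi1 (cl_conj_mat A) =
       four_block_mat (0\<^sub>m m m) (1\<^sub>m m) (1\<^sub>m m) (0\<^sub>m m m) * Phi1 A *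
       four_block_mat (0\<^sub>m n n) (1\<^sub>m n) (1\<^sub>m n) (0\<^sub>m n n)
   \<and> Phi1 (cl_sharp A) = mat_adjoint (Phi1 A)
   \<and> A = cl_of (1/4) \<cdot>\<^sub>m
         (block_row (Cl1 1 (-\<i>) \<cdot>\<^sub>m 1\<^sub>m m) (Cl1 \<i> (-1) \<cdot>\<^sub>m 1\<^sub>m m)
          * map_mat cl_of (Phi1 A)
          * transpose_mat (block_row (Cl1 1 (-\<i>) \<cdot>\<^sub>m 1\<^sub>m n) (Cl1 (-\<i>) 1 \<cdot>\<^sub>m 1\<^sub>m n)))
   \<and> (m = n \<longrightarrow>
        (invertible_mat A \<longleftrightarrow> invertible_mat (Phi1 A))
      \<and> (\<forall>X. inverts_mat A X \<and> inverts_mat X A \<longrightarrow>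
             inverts_mat (Phi1 A) (Phi1 X) \<and> inverts_mat (Phi1 X) (Phi1 A))
      \<and> poly_mat_eval (char_poly (Phi1 A)) A = 0\<^sub>m m m)"
proof -
  have G: "m = n \<longrightarrow>
        (invertible_mat A \<longleftrightarrow> invertible_mat (Phi1 A))
      \<and> (\<forall>X. inverts_mat A X \<and> inverts_mat X A \<longrightarrow>
             inverts_mat (Phi1 A) (Phi1 X) \<and> inverts_mat (Phi1 X) (Phi1 A))
      \<and> poly_mat_eval (char_poly (Phi1 A)) A = 0\<^sub>m m m"
  proof
    assume mn: "m = n"
    then have An: "A \<in> carrier_mat n n" using assms(1) by simp
    show "(invertible_mat A \<longleftrightarrow> invertible_mat (Phi1 A))
      \<and> (\<forall>X. inverts_mat A X \<and> inverts_mat X A \<longrightarrow>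
             inverts_mat (Phi1 A) (Phi1 X) \<and> inverts_mat (Phi1 X) (Phi1 A))
      \<and> poly_mat_eval (char_poly (Phi1 A)) A = 0\<^sub>m m m"
      using part_g1[OF An] part_g2[OF An] part_h[OF An] mn by blast
  qed
  show ?thesis
    using part_a[OF assms(1,2)] part_b[OF assms(1,2)] part_c1[OF assms(1,3)] part_c2[of c A]
      part_c3[of m] part_d[OF assms(1)] part_e[of A] part_f[OF assms(1)] G
    by blast
qed

end
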